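(* Let $\dot x=f(x)+\sum_{i=1}^m g_i(x)u_i$ with $m\ge2$, let $h:\mathbb{R}^n\to\mathbb{R}$ have relative degree $r$ at $x$, and let $\xi=[h,L_fh,\dots,L_f^{r-1}h]^\top$. Let $G=\mathrm{span}\{g_1(x),\dots,g_m(x)\}$, $G^\perp$ its annihilator, and $\Xi=\mathrm{span}\{d\xi_1(x),\dots,d\xi_r(x)\}$. If $g_1(x),\dots,g_m(x)$ are linearly independent, then there always exists a nonzero $q\in\mathbb{R}^n$ such that $q\perp G^\perp$ and $q\perp\Xi$, i.e., $\omega q=0$ for every covector $\omega\in G^\perp\cup\Xi$.
   Context: $h$ has relative degree $r$ at $x$ if for all $i$ and $k=0,\dots,r-2$, $L_{g_i}L_f^kh\equiv0$ on an open set around $x$, and $[L_{g_1}L_f^{r-1}h(x),\dots,L_{g_m}L_f^{r-1}h(x)]$ has a nonzero entry. *)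

theory Defs
  imports "HOL-Analysis.Analysis"
begin

definition lie :: "(real^'n \<Rightarrow> real^'n) \<Rightarrow> (real^'n \<Rightarrow> real) \<Rightarrow> real^'n \<Rightarrow> real" where
  "lie v h = (\<lambda>y. frechet_derivative h (at y) (v y))"

text \<open>Smoothness surrogate: h and all its iterated Lie derivatives along any finite
  word of the vector fields f, g_0, ..., g_(m-1) are differentiable everywhere; the
  vector fields themselves are differentiable everywhere.\<close>
definition lie_smooth ::
  "(real^'n \<Rightarrow> real^'n) \<Rightarrow> (nat \<Rightarrow> real^'n \<Rightarrow> real^'n) \<Rightarrow> nat \<Rightarrow> (real^'n \<Rightarrow> real) \<Rightarrow> bool" where
  "lie_smooth f g m h \<longleftrightarrow>
     (\<forall>y. f differentiable (at y)) \<and> (\<forall>i<m. \<forall>y. g i differentiable (at y)) \<and>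
     (\<forall>ws. set ws \<subseteq> insert f (g ` {..<m}) \<longrightarrow>
        (\<forall>y. foldr lie ws h differentiable (at y)))"

definition relative_degree ::
  "(real^'n \<Rightarrow> real^'n) \<Rightarrow> (nat \<Rightarrow> real^'n \<Rightarrow> real^'n) \<Rightarrow> nat \<Rightarrow> (real^'n \<Rightarrow> real) \<Rightarrow> nat \<Rightarrow> real^'n \<Rightarrow> bool" where
  "relative_degree f g m h r x \<longleftrightarrow>
     r \<ge> 1 \<and>
     (\<exists>U. open U \<and> x \<in> U \<and>
        (\<forall>i<m. \<forall>k. k + 2 \<le> r \<longrightarrow> (\<forall>y\<in>U. lie (g i) ((lie f ^^ k) h) y = 0))) \<and>
     (\<exists>i<m. lie (g i) ((lie f ^^ (r - 1)) h) x \<noteq> 0)"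

text \<open>xi_k = L_f^(k-1) h, k = 1..r (indexed here by k < r as L_f^k h).\<close>
definition xi :: "(real^'n \<Rightarrow> real^'n) \<Rightarrow> (real^'n \<Rightarrow> real) \<Rightarrow> nat \<Rightarrow> real^'n \<Rightarrow> real" where
  "xi f h k = (lie f ^^ k) h"

definition annihilator :: "(real^'n) set \<Rightarrow> (real^'n \<Rightarrow> real) set" where
  "annihilator G = {\<omega>. linear \<omega> \<and> (\<forall>v\<in>G. \<omega> v = 0)}"

definition covec_span :: "(nat \<Rightarrow> ('a::real_vector \<Rightarrow> real)) \<Rightarrow> nat \<Rightarrow> ('a \<Rightarrow> real) set" where
  "covec_span w r = {\<lambda>v. \<Sum>k<r. c k * w k v | c. True}"

end

theory Submission
  imports Defs
begin

lemma foldr_rep: "foldr lie (replicate k f) h = (lie f ^^ k) h"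
  by (induction k) auto

lemma dlin:
  assumes "lie_smooth f g m h"
  shows "linear (frechet_derivative ((lie f ^^ k) h) (at y))"
proof -
  have "set (replicate k f) \<subseteq> insert f (g ` {..<m})" by auto
  then have "foldr lie (replicate k f) h differentiable (at y)"
    using assms unfolding lie_smooth_def by blast
  then have "((lie f ^^ k) h) differentiable (at y)" by (simp add: foldr_rep)
  then show ?thesis
    using frechet_derivative_works has_derivative_linear by blast
qed

theorem lemma6:
  fixes f :: "real^'n \<Rightarrow> real^'n" and g :: "nat \<Rightarrow> real^'n \<Rightarrow> real^'n"
    and h :: "real^'n \<Rightarrow> real" and m r :: nat and x :: "real^'n"
  assumes "m \<ge> 2"
    and "lie_smooth f g m h"
    and "relative_degree f g m h r x"
    and "inj_on (\<lambda>i. g i x) {..<m}"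
    and "independent ((\<lambda>i. g i x) ` {..<m})"
  shows "\<exists>q::real^'n. q \<noteq> 0 \<and>
           (\<forall>\<omega> \<in> annihilator (span ((\<lambda>i. g i x) ` {..<m})). \<omega> q = 0) \<and>
           (\<forall>\<omega> \<in> covec_span (\<lambda>k. frechet_derivative (xi f h k) (at x)) r. \<omega> q = 0)"
proof -
  define S where "S = (\<lambda>i. g i x) ` {..<m}"
  define D where "D k = frechet_derivative ((lie f ^^ k) h) (at x)" for k
  have Dlin: "linear (D k)" for k unfolding D_def using dlin[OF assms(2)] .
  define a0 where "a0 = D (r - 1) (g 0 x)"
  define a1 where "a1 = D (r - 1) (g 1 x)"
  define q where "q = (if a0 = 0 then g 0 x else a1 *\<^sub>R g 0 x - a0 *\<^sub>R g 1 x)"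
  have g0S: "g 0 x \<in> S" and g1S: "g 1 x \<in> S" using assms(1) unfolding S_def by auto
  have neq: "g 0 x \<noteq> g 1 x" using assms(1,4) unfolding inj_on_def by fastforce
  have ind: "independent S" using assms(5) S_def by simp
  obtain U where U: "open U" "x \<in> U"
    "\<forall>i<m. \<forall>k. k + 2 \<le> r \<longrightarrow> (\<forall>y\<in>U. lie (g i) ((lie f ^^ k) h) y = 0)"
    using assms(3) unfolding relative_degree_def by blast
  have r1: "r \<ge> 1" using assms(3) unfolding relative_degree_def by blast
  have low: "D k (g i x) = 0" if "i < m" "k + 2 \<le> r" for i k
    using U that unfolding D_def lie_def by blast
  have qnz: "q \<noteq> 0"
  proof (cases "a0 = 0")
    case True
    then have "q = g 0 x" using q_def by simp
    then show ?thesis using g0S ind dependent_zero by force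
  next
    case False
    show ?thesis
    proof
      assume "q = 0"
      then have "a0 *\<^sub>R g 1 x = a1 *\<^sub>R g 0 x" using False q_def by simp
      moreover have "g 1 x = inverse a0 *\<^sub>R (a0 *\<^sub>R g 1 x)" using False by simp
      ultimately have "g 1 x = (inverse a0 * a1) *\<^sub>R g 0 x" by simp
      then have "g 1 x \<in> span (S - {g 1 x})"
        using g0S neq by (simp add: span_base span_mul)
      then show False using ind g1S dependent_def by blast
    qed
  qed
  have qspan: "q \<in> span S" using g0S g1S q_def
    by (auto intro: span_base span_diff span_mul)
  have A: "\<forall>\<omega> \<in> annihilator (span S). \<omega> q = 0"
  proof
    fix \<omega> assume "\<omega> \<in> annihilator (span S)"
    then have "\<forall>v\<in>span S. \<omega> v = 0" unfolding annihilator_def by auto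
    then show "\<omega> q = 0" using qspan by blast
  qed
  have Dq: "D k q = 0" if "k < r" for k
  proof (cases "k + 2 \<le> r")
    case True
    have "D k (g 0 x) = 0" "D k (g 1 x) = 0" using low True assms(1) by auto
    then show ?thesis using Dlin[of k] q_def
      by (simp add: linear_diff linear_cmul)
  next
    case False
    then have "k = r - 1" using that by simp
    then show ?thesis using Dlin[of k] q_def a0_def a1_def
      by (simp add: linear_diff linear_cmul)
  qed
  have B: "\<forall>\<omega> \<in> covec_span (\<lambda>k. frechet_derivative (xi f h k) (at x)) r. \<omega> q = 0"
  proof
    fix \<omega> assume "\<omega> \<in> covec_span (\<lambda>k. frechet_derivative (xi f h k) (at x)) r"
    then obtain c where c: "\<omega> = (\<lambda>v. \<Sum>k<r. c k * D k v)"
      unfolding covec_span_def xi_def D_def by blast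
    have "(\<Sum>k<r. c k * D k q) = 0" by (rule sum.neutral) (simp add: Dq)
    then show "\<omega> q = 0" using c by simp
  qed
  have "q \<noteq> 0 \<and> (\<forall>\<omega> \<in> annihilator (span S). \<omega> q = 0) \<and>
     (\<forall>\<omega> \<in> covec_span (\<lambda>k. frechet_derivative (xi f h k) (at x)) r. \<omega> q = 0)"
    using qnz A B by blast
  then show ?thesis unfolding S_def by blast
qed

end
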